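(* Consider the parallel multiple access channel power allocation game with $K\ge 1$ users and $A\ge 1$ nodes, as described in the context, with random channel gains $g_{k\alpha}$. Let $p\in\Delta$ be a Nash equilibrium of the game, and let $\mathcal{G}$ be any multigraph that represents $p$. Then, almost surely (with respect to the law of the channel gains), $\mathcal{G}$ is a forest, i.e. it contains no cycles (where two distinct edges joining the same pair of nodes also count as a cycle).
   Context: Setting: users $\mathcal{K}=\{1,\dots,K\}$, nodes $\mathcal{A}=\{1,\dots,A\}$. User $k$ has maximum power $P_k>0$ and strategy set $\Delta_k=\{p_k\in\mathbb{R}^{\mathcal{A}}: p_{k\alpha}\ge 0,\ \sum_\alpha p_{k\alpha}=P_k\}$; the profile space is $\Delta=\prod_k\Delta_k$. Payoffs are $u_k(p)=\sum_{\alpha\in\mathcal{A}} b_\alpha\log\bigl(1+\frac{g_{k\alpha}p_{k\alpha}}{\sigma_\alpha^2+\sum_{\ell\neq k}g_{\ell\alpha}p_{\ell\alpha}}\bigr)$, with constants $b_\alpha>0$, $\sigma_\alpha^2>0$, and channel gains $g_{k\alpha}>0$ which are random, drawn from a continuous (nonatomic) probability distribution on the positive reals; all probabilistic statements refer to the law of the $g_{k\alpha}$. A profile $q\in\Delta$ is a Nash equilibrium if $u_k(q)\ge u_k(q_{-k};q_k')$ for all $k$ and all $q_k'\in\Delta_k$. The support of $p_k$ is $\mathrm{supp}(p_k)=\{\alpha: p_{k\alpha}>0\}$. A multigraph $\mathcal{G}=(\mathcal{V},\mathcal{E})$ represents $p\in\Delta$ if $\mathcal{V}=\mathcal{A}$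 and, for each user $k$, there is a node $\alpha\in\mathrm{supp}(p_k)$ (the hub of $k$) which is joined by an edge (owned by user $k$) to every other node $\beta\in\mathrm{supp}(p_k)\setminus\{\alpha\}$, and $\mathcal{E}$ consists exactly of these edges over all users. *)

theory Defs
  imports "HOL-Probability.Probability"
begin

definition users :: "nat \<Rightarrow> nat set" where "users K = {1..K}"
definition nodes :: "nat \<Rightarrow> nat set" where "nodes A = {1..A}"

definition strat_set :: "nat \<Rightarrow> (nat \<Rightarrow> real) \<Rightarrow> real \<Rightarrow> (nat \<Rightarrow> real) set" where
  "strat_set A P Pk = {q. (\<forall>\<alpha>\<in>nodes A. q \<alpha> \<ge> 0) \<and> (\<Sum>\<alpha>\<in>nodes A. q \<alpha>) = Pk}"

definition profile_space :: "nat \<Rightarrow> nat \<Rightarrow> (nat \<Rightarrow> real) \<Rightarrow> (nat \<Rightarrow> nat \<Rightarrow> real) set" where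
  "profile_space K A P = {p. \<forall>k\<in>users K. p k \<in> strat_set A P (P k)}"

definition payoff :: "nat \<Rightarrow> nat \<Rightarrow> (nat \<Rightarrow> real) \<Rightarrow> (nat \<Rightarrow> real) \<Rightarrow> (nat \<times> nat \<Rightarrow> real)
    \<Rightarrow> (nat \<Rightarrow> nat \<Rightarrow> real) \<Rightarrow> nat \<Rightarrow> real" where
  "payoff K A b \<sigma>2 g p k = (\<Sum>\<alpha>\<in>nodes A. b \<alpha> * ln (1 + g (k, \<alpha>) * p k \<alpha> /
      (\<sigma>2 \<alpha> + (\<Sum>l\<in>users K - {k}. g (l, \<alpha>) * p l \<alpha>))))"

definition nash_eq :: "nat \<Rightarrow> nat \<Rightarrow> (nat \<Rightarrow> real) \<Rightarrow> (nat \<Rightarrow> real) \<Rightarrow> (nat \<Rightarrow> real)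
    \<Rightarrow> (nat \<times> nat \<Rightarrow> real) \<Rightarrow> (nat \<Rightarrow> nat \<Rightarrow> real) \<Rightarrow> bool" where
  "nash_eq K A P b \<sigma>2 g q \<longleftrightarrow> q \<in> profile_space K A P \<and>
     (\<forall>k\<in>users K. \<forall>q'\<in>strat_set A P (P k).
        payoff K A b \<sigma>2 g q k \<ge> payoff K A b \<sigma>2 g (q(k := q')) k)"

definition supp :: "nat \<Rightarrow> (nat \<Rightarrow> nat \<Rightarrow> real) \<Rightarrow> nat \<Rightarrow> nat set" where
  "supp A p k = {\<alpha>\<in>nodes A. p k \<alpha> > 0}"

text \<open>A multigraph on vertex set nodes A is given by its edge set; an edge is a triple
  (k, alpha, beta): owned by user k, joining nodes alpha and beta. Distinct triples are
  distinct edges (so parallel edges of different users are allowed).\<close>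

type_synonym edge = "nat \<times> nat \<times> nat"

definition ends :: "edge \<Rightarrow> nat set" where
  "ends e = {fst (snd e), snd (snd e)}"

definition represents :: "nat \<Rightarrow> nat \<Rightarrow> (nat \<Rightarrow> nat \<Rightarrow> real) \<Rightarrow> edge set \<Rightarrow> bool" where
  "represents K A p E \<longleftrightarrow> (\<exists>hub :: nat \<Rightarrow> nat.
      (\<forall>k\<in>users K. hub k \<in> supp A p k) \<and>
      E = {(k, hub k, \<beta>) | k \<beta>. k \<in> users K \<and> \<beta> \<in> supp A p k \<and> \<beta> \<noteq> hub k})"

text \<open>A cycle: n >= 2 distinct vertices v_0..v_{n-1} and n distinct edges e_0..e_{n-1}
  of E, with e_i joining v_i and v_{(i+1) mod n}. For n = 2 this is a pair of distinct
  parallel edges.\<close>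

definition has_cycle :: "nat set \<Rightarrow> edge set \<Rightarrow> bool" where
  "has_cycle V E \<longleftrightarrow> (\<exists>vs es. length vs \<ge> 2 \<and> length es = length vs \<and>
      distinct vs \<and> distinct es \<and> set vs \<subseteq> V \<and> set es \<subseteq> E \<and>
      (\<forall>i<length vs. ends (es ! i) = {vs ! i, vs ! ((i + 1) mod length vs)}))"

definition is_forest :: "nat set \<Rightarrow> edge set \<Rightarrow> bool" where
  "is_forest V E \<longleftrightarrow> \<not> has_cycle V E"

end

theory Submission
  imports Defs
begin


lemma rot_prod:
  fixes f :: "nat \<Rightarrow> 'a::comm_monoid_mult"
  assumes "n > 0"
  shows "(\<Prod>m<n. f ((m+1) mod n)) = (\<Prod>m<n. f m)"
  apply (rule prod.reindex_bij_witness[where i="\<lambda>j. (j + n - 1) mod n" and j="\<lambda>m. (m+1) mod n"])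
  using assms apply (auto simp: mod_Suc_eq)
  subgoal for a
    by (cases "Suc a = n") auto
  done

definition goodpat :: "nat \<Rightarrow> nat \<Rightarrow> nat list \<Rightarrow> nat list \<Rightarrow> bool" where
  "goodpat K A vs ks \<longleftrightarrow> length vs \<ge> 2 \<and> length ks = length vs \<and> distinct vs \<and>
     set vs \<subseteq> nodes A \<and> set ks \<subseteq> users K \<and>
     (\<exists>i<length vs. ks ! ((i + length vs - 1) mod length vs) \<noteq> ks ! i)"


context
  fixes K A :: nat and P b \<sigma>2 :: "nat \<Rightarrow> real" and g :: "nat \<times> nat \<Rightarrow> real"
    and p :: "nat \<Rightarrow> nat \<Rightarrow> real"
  assumes bpos: "\<forall>\<alpha>\<in>nodes A. b \<alpha> > 0"
    and spos: "\<forall>\<alpha>\<in>nodes A. \<sigma>2 \<alpha> > 0"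
    and gpos: "\<forall>k\<in>users K. \<forall>\<alpha>\<in>nodes A. g (k,\<alpha>) > 0"
    and ne: "nash_eq K A P b \<sigma>2 g p"
begin

definition Iex :: "nat \<Rightarrow> nat \<Rightarrow> real" where
  "Iex k \<gamma> = \<sigma>2 \<gamma> + (\<Sum>l\<in>users K - {k}. g (l, \<gamma>) * p l \<gamma>)"

definition TT :: "nat \<Rightarrow> real" where
  "TT \<gamma> = \<sigma>2 \<gamma> + (\<Sum>l\<in>users K. g (l, \<gamma>) * p l \<gamma>)"

lemma pnonneg: "k \<in> users K \<Longrightarrow> \<gamma> \<in> nodes A \<Longrightarrow> p k \<gamma> \<ge> 0"
  using ne by (auto simp: nash_eq_def profile_space_def strat_set_def)

lemma gnn: "k \<in> users K \<Longrightarrow> \<gamma> \<in> nodes A \<Longrightarrow> g (k,\<gamma>) \<ge> 0"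
  using gpos by (simp add: less_imp_le)

lemma Iex_pos: "\<gamma> \<in> nodes A \<Longrightarrow> Iex k \<gamma> > 0"
proof -
  assume g: "\<gamma> \<in> nodes A"
  have "(\<Sum>l\<in>users K - {k}. g (l, \<gamma>) * p l \<gamma>) \<ge> 0"
    by (rule sum_nonneg) (use g gnn pnonneg in \<open>auto intro!: mult_nonneg_nonneg\<close>)
  thus ?thesis using spos g unfolding Iex_def by force
qed

lemma TT_eq: "k \<in> users K \<Longrightarrow> TT \<gamma> = Iex k \<gamma> + g (k,\<gamma>) * p k \<gamma>"
  unfolding TT_def Iex_def
  by (subst sum.remove[of _ k]) (auto simp: users_def)

lemma payoff_alt:
  assumes k: "k \<in> users K" and q: "\<forall>\<gamma>\<in>nodes A. q \<gamma> \<ge> 0"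
  shows "payoff K A b \<sigma>2 g (p(k := q)) k =
     (\<Sum>\<gamma>\<in>nodes A. b \<gamma> * (ln (Iex k \<gamma> + g (k,\<gamma>) * q \<gamma>) - ln (Iex k \<gamma>)))"
  unfolding payoff_def
proof (rule sum.cong[OF refl])
  fix \<gamma> assume g: "\<gamma> \<in> nodes A"
  have s: "(\<Sum>l\<in>users K - {k}. g (l, \<gamma>) * (p(k := q)) l \<gamma>) = (\<Sum>l\<in>users K - {k}. g (l, \<gamma>) * p l \<gamma>)"
    by (rule sum.cong) auto
  have I: "Iex k \<gamma> > 0" using Iex_pos g by auto
  have gq: "g (k,\<gamma>) * q \<gamma> \<ge> 0" using gnn k g q by (auto intro!: mult_nonneg_nonneg)
  have "1 + g (k, \<gamma>) * q \<gamma> / Iex k \<gamma> = (Iex k \<gamma> + g (k,\<gamma>) * q \<gamma>) / Iex k \<gamma>"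
    using I by (simp add: field_simps)
  moreover have "ln ((Iex k \<gamma> + g (k,\<gamma>) * q \<gamma>) / Iex k \<gamma>) = ln (Iex k \<gamma> + g (k,\<gamma>) * q \<gamma>) - ln (Iex k \<gamma>)"
    using I gq by (subst ln_div) auto
  ultimately show "b \<gamma> * ln (1 + g (k, \<gamma>) * (p(k := q)) k \<gamma> / (\<sigma>2 \<gamma> + (\<Sum>l\<in>users K - {k}. g (l, \<gamma>) * (p(k := q)) l \<gamma>)))
      = b \<gamma> * (ln (Iex k \<gamma> + g (k, \<gamma>) * q \<gamma>) - ln (Iex k \<gamma>))"
    using s by (simp add: Iex_def)
qed

lemma kkt_le:
  assumes k: "k \<in> users K" and a: "\<alpha> \<in> nodes A" and pa: "p k \<alpha> > 0"
    and bn: "\<beta> \<in> nodes A" and ab: "\<alpha> \<noteq> \<beta>"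
  shows "b \<beta> * g (k,\<beta>) / TT \<beta> \<le> b \<alpha> * g (k,\<alpha>) / TT \<alpha>"
proof (rule ccontr)
  define w where "w \<gamma> = b \<gamma> * g (k,\<gamma>) / TT \<gamma>" for \<gamma>
  define e where "e \<gamma> = (if \<gamma> = \<beta> then 1 else 0) - (if \<gamma> = \<alpha> then 1 else (0::real))" for \<gamma>
  define q where "q t = (\<lambda>\<gamma>. p k \<gamma> + t * e \<gamma>)" for t
  define \<phi> where "\<phi> t = (\<Sum>\<gamma>\<in>nodes A. b \<gamma> * (ln (Iex k \<gamma> + g (k,\<gamma>) * q t \<gamma>) - ln (Iex k \<gamma>)))" for t
  assume "\<not> ?thesis"
  hence D: "w \<beta> - w \<alpha> > 0" unfolding w_def by simp
  have fin: "finite (nodes A)" by (simp add: nodes_def)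
  have der: "DERIV \<phi> 0 :> (\<Sum>\<gamma>\<in>nodes A. b \<gamma> * (g (k,\<gamma>) * e \<gamma> / (Iex k \<gamma> + g (k,\<gamma>) * p k \<gamma>)))"
    unfolding \<phi>_def
  proof (rule DERIV_sum)
    fix \<gamma> assume g: "\<gamma> \<in> nodes A"
    have pos: "Iex k \<gamma> + g (k,\<gamma>) * p k \<gamma> > 0"
      using Iex_pos[OF g] gnn[OF k g] pnonneg[OF k g] by (simp add: add_pos_nonneg)
    show "DERIV (\<lambda>x. b \<gamma> * (ln (Iex k \<gamma> + g (k, \<gamma>) * q x \<gamma>) - ln (Iex k \<gamma>))) 0 :>
        b \<gamma> * (g (k, \<gamma>) * e \<gamma> / (Iex k \<gamma> + g (k, \<gamma>) * p k \<gamma>))"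
      unfolding q_def using pos by (auto intro!: derivative_eq_intros simp: field_simps)
  qed
  have "(\<Sum>\<gamma>\<in>nodes A. b \<gamma> * (g (k,\<gamma>) * e \<gamma> / (Iex k \<gamma> + g (k,\<gamma>) * p k \<gamma>)))
      = (\<Sum>\<gamma>\<in>nodes A. (if \<gamma> = \<beta> then w \<gamma> else 0) - (if \<gamma> = \<alpha> then w \<gamma> else 0))"
    by (rule sum.cong) (auto simp: e_def w_def TT_eq[OF k, symmetric])
  also have "\<dots> = w \<beta> - w \<alpha>" using a bn fin by (simp add: sum_subtractf)
  finally have der2: "DERIV \<phi> 0 :> w \<beta> - w \<alpha>" using der by simp
  obtain d where d: "d > 0" "\<And>h. h > 0 \<Longrightarrow> h < d \<Longrightarrow> \<phi> 0 < \<phi> (0 + h)"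
    using DERIV_pos_inc_right[OF der2 D] by blast
  define h where "h = min (d/2) (p k \<alpha>)"
  have h: "h > 0" "h < d" "h \<le> p k \<alpha>" using d pa by (auto simp: h_def)
  have lt: "\<phi> 0 < \<phi> h" using d(2)[OF h(1,2)] by simp
  have q0: "q 0 = p k" by (simp add: q_def)
  have p0: "\<phi> 0 = payoff K A b \<sigma>2 g p k"
    using payoff_alt[OF k, of "p k"] pnonneg[OF k] by (simp add: \<phi>_def q0)
  have qnn: "\<forall>\<gamma>\<in>nodes A. q h \<gamma> \<ge> 0"
    using h pnonneg[OF k] ab by (auto simp: q_def e_def)
  have ph: "\<phi> h = payoff K A b \<sigma>2 g (p(k := q h)) k"
    using payoff_alt[OF k qnn] by (simp add: \<phi>_def)
  have "(\<Sum>\<gamma>\<in>nodes A. q h \<gamma>) = (\<Sum>\<gamma>\<in>nodes A. p k \<gamma>) + h * (\<Sum>\<gamma>\<in>nodes A. e \<gamma>)"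
    by (simp add: q_def sum.distrib sum_distrib_left)
  also have "(\<Sum>\<gamma>\<in>nodes A. e \<gamma>) = 0" using a bn fin by (simp add: e_def sum_subtractf)
  also have "(\<Sum>\<gamma>\<in>nodes A. p k \<gamma>) = P k"
    using ne k by (auto simp: nash_eq_def profile_space_def strat_set_def)
  finally have "q h \<in> strat_set A P (P k)" using qnn by (simp add: strat_set_def)
  hence "payoff K A b \<sigma>2 g p k \<ge> payoff K A b \<sigma>2 g (p(k := q h)) k"
    using ne k by (auto simp: nash_eq_def)
  thus False using lt p0 ph by simp
qed

lemma kkt_eq:
  assumes k: "k \<in> users K" and a: "\<alpha> \<in> supp A p k" and bn: "\<beta> \<in> supp A p k"
  shows "b \<beta> * g (k,\<beta>) / TT \<beta> = b \<alpha> * g (k,\<alpha>) / TT \<alpha>"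
proof (cases "\<alpha> = \<beta>")
  case False
  show ?thesis using kkt_le[OF k _ _ _ False] kkt_le[OF k _ _ _ False[symmetric]] a bn
    by (force simp: supp_def)
qed simp

lemma TT_pos: "\<gamma> \<in> nodes A \<Longrightarrow> TT \<gamma> > 0"
proof -
  assume g: "\<gamma> \<in> nodes A"
  have "(\<Sum>l\<in>users K. g (l, \<gamma>) * p l \<gamma>) \<ge> 0"
    by (rule sum_nonneg) (use g gnn pnonneg in \<open>auto intro!: mult_nonneg_nonneg\<close>)
  thus ?thesis using spos g unfolding TT_def by force
qed

lemma cycle_pattern:
  assumes rep: "represents K A p E" and cyc: "has_cycle (nodes A) E"
  shows "\<exists>vs ks. goodpat K A vs ks \<and>
     (\<Prod>m<length vs. g (ks!m, vs!m)) = (\<Prod>m<length vs. g (ks!m, vs!((m+1) mod length vs)))"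
proof -
  obtain hub where hub: "\<forall>k\<in>users K. hub k \<in> supp A p k"
    and Edef: "E = {(k, hub k, \<beta>) | k \<beta>. k \<in> users K \<and> \<beta> \<in> supp A p k \<and> \<beta> \<noteq> hub k}"
    using rep unfolding represents_def by blast
  obtain vs es where len: "length vs \<ge> 2" "length es = length vs"
    and dist: "distinct vs" "distinct es" and sub: "set vs \<subseteq> nodes A" "set es \<subseteq> E"
    and ends: "\<forall>i<length vs. ends (es ! i) = {vs ! i, vs ! ((i + 1) mod length vs)}"
    using cyc unfolding has_cycle_def by blast
  define n where "n = length vs"
  define ks where "ks = map fst es"
  have npos: "n > 0" using len(1) unfolding n_def by linarith
  have edge: "ks!i \<in> users K \<and> fst (snd (es!i)) = hub (ks!i) \<and>
      snd (snd (es!i)) \<in> supp A p (ks!i) \<and> snd (snd (es!i)) \<noteq> hub (ks!i)" if i: "i < n" for i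
  proof -
    have "es!i \<in> E" using sub i len by (auto simp: n_def)
    then show ?thesis using i len by (auto simp: Edef ks_def n_def)
  qed
  have ends2: "ends (es!i) = {hub (ks!i), snd (snd (es!i))}" if "i < n" for i
    using edge[OF that] by (simp add: ends_def)
  have insupp: "vs!i \<in> supp A p (ks!i) \<and> vs!((i+1) mod n) \<in> supp A p (ks!i)" if i: "i < n" for i
  proof -
    have e: "{vs ! i, vs ! ((i + 1) mod n)} = {hub (ks!i), snd (snd (es!i))}"
      using ends ends2[OF i] i by (simp add: n_def)
    have "hub (ks!i) \<in> supp A p (ks!i)" using hub edge[OF i] by blast
    hence "{hub (ks!i), snd (snd (es!i))} \<subseteq> supp A p (ks!i)" using edge[OF i] by simp
    hence "{vs ! i, vs ! ((i + 1) mod n)} \<subseteq> supp A p (ks!i)" by (simp only: e)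
    thus ?thesis by simp
  qed
  define r where "r \<gamma> = b \<gamma> / TT \<gamma>" for \<gamma>
  have weq: "g (ks!i, vs!((i+1) mod n)) * r (vs!((i+1) mod n)) = g (ks!i, vs!i) * r (vs!i)"
    if i: "i < n" for i
    using kkt_eq[of "ks!i" "vs!i" "vs!((i+1) mod n)"] edge[OF i] insupp[OF i]
    by (simp add: r_def mult.commute)
  have "(\<Prod>m<n. g (ks!m, vs!m)) * (\<Prod>m<n. r (vs!m)) = (\<Prod>m<n. g (ks!m, vs!m) * r (vs!m))"
    by (simp add: prod.distrib)
  also have "\<dots> = (\<Prod>m<n. g (ks!m, vs!((m+1) mod n)) * r (vs!((m+1) mod n)))"
    by (rule prod.cong[OF refl]) (metis lessThan_iff weq)
  also have "\<dots> = (\<Prod>m<n. g (ks!m, vs!((m+1) mod n))) * (\<Prod>m<n. r (vs!((m+1) mod n)))"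
    by (simp add: prod.distrib)
  also have "(\<Prod>m<n. r (vs!((m+1) mod n))) = (\<Prod>m<n. r (vs!m))"
    using rot_prod[OF npos, of "\<lambda>m. r (vs!m)"] by simp
  finally have eq0: "(\<Prod>m<n. g (ks!m, vs!m)) * (\<Prod>m<n. r (vs!m)) =
      (\<Prod>m<n. g (ks!m, vs!((m+1) mod n))) * (\<Prod>m<n. r (vs!m))" .
  have rnz: "r (vs!m) \<noteq> 0" if "m < n" for m
  proof -
    have "vs!m \<in> nodes A" using sub that by (auto simp: n_def)
    thus "r (vs!m) \<noteq> 0" using bpos TT_pos[of "vs!m"] by (auto simp: r_def)
  qed
  have "(\<Prod>m<n. r (vs!m)) \<noteq> 0" using rnz by (simp add: prod_zero_iff)
  with eq0 have eq: "(\<Prod>m<n. g (ks!m, vs!m)) = (\<Prod>m<n. g (ks!m, vs!((m+1) mod n)))" by simp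
  have nae: "\<exists>i<n. ks ! ((i + n - 1) mod n) \<noteq> ks ! i"
  proof (rule ccontr)
    assume "\<not> ?thesis"
    hence prev: "\<And>i. i < n \<Longrightarrow> ks ! ((i + n - 1) mod n) = ks ! i" by blast
    have all: "i < n \<Longrightarrow> ks ! i = ks ! 0" for i
    proof (induction i)
      case (Suc i)
      have "ks ! ((Suc i + n - 1) mod n) = ks ! Suc i" using prev Suc.prems .
      moreover have "(Suc i + n - 1) mod n = i" using Suc.prems by simp
      ultimately show ?case using Suc by simp
    qed simp
    define h where "h = hub (ks!0)"
    have hin: "h \<in> {vs ! i, vs ! ((i + 1) mod n)}" if "i < n" for i
    proof -
      have "h \<in> ends (es!i)" using ends2[OF that] all[OF that] by (simp add: h_def)
      thus ?thesis using ends[rule_format, of i] that by (simp add: n_def)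
    qed
    have dv: "i < n \<Longrightarrow> j < n \<Longrightarrow> vs!i = vs!j \<longleftrightarrow> i = j" for i j
      using dist(1) by (simp add: n_def nth_eq_iff_index_eq)
    show False
    proof (cases "n = 2")
      case True
      have e0: "fst (snd (es!0)) = h" "snd (snd (es!0)) \<noteq> h"
        using edge[of 0] npos by (auto simp: h_def)
      have e1: "fst (snd (es!1)) = h" "snd (snd (es!1)) \<noteq> h"
        using edge[of 1] all[of 1] True by (auto simp: h_def)
      have "ends (es!0) = {vs!0, vs!1}" "ends (es!1) = {vs!1, vs!0}"
        using ends True by (auto simp: n_def)
      hence "{h, snd (snd (es!0))} = {h, snd (snd (es!1))}"
        using ends2[of 0] ends2[of 1] True e0 e1 all[of 1] by (auto simp: h_def)
      hence "snd (snd (es!0)) = snd (snd (es!1))" using e0(2) e1(2) by (auto simp: doubleton_eq_iff)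
      moreover have "fst (es!0) = fst (es!1)" using all[of 1] True by (simp add: ks_def len n_def)
      ultimately have "es!0 = es!1" using e0(1) e1(1) by (simp add: prod_eq_iff)
      moreover have "es!0 \<noteq> es!1" using dist(2) len True by (simp add: nth_eq_iff_index_eq n_def)
      ultimately show False by simp
    next
      case False
      hence n3: "n \<ge> 3" using len by (simp add: n_def)
      have h0: "h = vs!0 \<or> h = vs!1" using hin[of 0] n3 by auto
      have h1: "h = vs!1 \<or> h = vs!2" using hin[of 1] n3 by (auto simp: numeral_2_eq_2)
      have h2: "h = vs!2 \<or> h = vs!(3 mod n)" using hin[of 2] n3 by simp
      have "3 mod n \<noteq> 1" using n3
        by (cases "n = 3") auto
      moreover have "3 mod n < n" using npos by simp
      ultimately show False using h0 h1 h2 dv[of 0 1] dv[of 0 2] dv[of 1 2] dv[of 1 "3 mod n"] n3 by auto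
    qed
  qed
  have lks: "length ks = n" using len by (simp add: ks_def n_def)
  have ksu: "set ks \<subseteq> users K"
  proof
    fix x assume "x \<in> set ks"
    then obtain i where "i < length ks" "x = ks!i" by (auto simp: in_set_conv_nth)
    thus "x \<in> users K" using edge lks by metis
  qed
  have "goodpat K A vs ks"
    unfolding goodpat_def using len(1) dist(1) sub(1) nae ksu lks by (simp add: n_def)
  thus ?thesis using eq by (auto simp: n_def)
qed

end


lemma comp_meas:
  assumes "j \<in> I" "sets \<mu> = sets borel"
  shows "(\<lambda>g. g j) \<in> borel_measurable (PiM I (\<lambda>_. \<mu>))"
  using measurable_component_singleton[OF assms(1), of "\<lambda>_. \<mu>"] measurable_cong_sets[OF refl assms(2)]
  by blast

lemma slice_null:
  assumes P: "prob_space \<mu>" and fin: "finite I" and c: "c \<in> I"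
    and S: "S \<in> sets (PiM I (\<lambda>_. \<mu>))"
    and sl: "\<And>x. \<exists>N\<in>null_sets \<mu>. \<forall>y. x(c:=y) \<in> S \<longrightarrow> y \<in> N"
  shows "S \<in> null_sets (PiM I (\<lambda>_. \<mu>))"
proof -
  interpret ps: product_sigma_finite "\<lambda>_. \<mu>"
    unfolding product_sigma_finite_def using prob_space_imp_sigma_finite[OF P] by simp
  define J where "J = I - {c}"
  have I: "I = insert c J" using c by (auto simp: J_def)
  have finJ: "finite J" "c \<notin> J" using fin by (auto simp: J_def)
  have meas: "indicator S \<in> borel_measurable (PiM (insert c J) (\<lambda>_. \<mu>))"
    using S I by simp
  have "emeasure (PiM I (\<lambda>_. \<mu>)) S = (\<integral>\<^sup>+ g. indicator S g \<partial>PiM (insert c J) (\<lambda>_. \<mu>))"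
    using S I by simp
  also have "\<dots> = (\<integral>\<^sup>+ x. (\<integral>\<^sup>+ y. indicator S (x(c := y)) \<partial>\<mu>) \<partial>PiM J (\<lambda>_. \<mu>))"
    by (rule ps.product_nn_integral_insert[OF finJ meas])
  also have "\<dots> = (\<integral>\<^sup>+ x. 0 \<partial>PiM J (\<lambda>_. \<mu>))"
  proof (rule nn_integral_cong)
    fix x
    obtain N where N: "N \<in> null_sets \<mu>" "\<forall>y. x(c:=y) \<in> S \<longrightarrow> y \<in> N" using sl by blast
    have "AE y in \<mu>. indicator S (x(c := y)) = (0::ennreal)"
      by (rule AE_I'[OF N(1)]) (use N(2) in \<open>auto simp: indicator_def\<close>)
    hence "(\<integral>\<^sup>+ y. indicator S (x(c := y)) \<partial>\<mu>) = (\<integral>\<^sup>+ y. 0 \<partial>\<mu>)"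
      by (rule nn_integral_cong_AE)
    thus "(\<integral>\<^sup>+ y. indicator S (x(c := y)) \<partial>\<mu>) = 0" by simp
  qed
  finally show ?thesis using S by (simp add: null_sets_def)
qed

lemma pat_null:
  fixes \<mu> :: "real measure"
  assumes P: "prob_space \<mu>" and sb: "sets \<mu> = sets borel"
    and pt: "\<forall>x. emeasure \<mu> {x} = 0"
    and gp: "goodpat K A vs ks"
  shows "AE g in PiM (users K \<times> nodes A) (\<lambda>_. \<mu>).
     (\<forall>c\<in>users K \<times> nodes A. g c > 0) \<longrightarrow>
     (\<Prod>m<length vs. g (ks!m, vs!m)) \<noteq> (\<Prod>m<length vs. g (ks!m, vs!((m+1) mod length vs)))"
proof -
  define I where "I = users K \<times> nodes A"
  define M where "M = PiM I (\<lambda>_. \<mu>)"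
  define n where "n = length vs"
  have fin: "finite I" by (simp add: I_def users_def nodes_def)
  obtain i where i: "i < n" "ks ! ((i + n - 1) mod n) \<noteq> ks ! i"
    using gp unfolding goodpat_def n_def by blast
  have len: "length ks = n" "n \<ge> 2" "distinct vs" "set vs \<subseteq> nodes A" "set ks \<subseteq> users K"
    using gp by (auto simp: goodpat_def n_def)
  have inI: "m < n \<Longrightarrow> j < n \<Longrightarrow> (ks!m, vs!j) \<in> I" for m j
    using len by (auto simp: I_def n_def)
  define c where "c = (ks!i, vs!i)"
  have cI: "c \<in> I" using inI i by (simp add: c_def)
  define F where "F g = (\<Prod>m\<in>{..<n}-{i}. g (ks!m, vs!m))" for g :: "nat \<times> nat \<Rightarrow> real"
  define R where "R g = (\<Prod>m<n. g (ks!m, vs!((m+1) mod n)))" for g :: "nat \<times> nat \<Rightarrow> real"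
  have L: "(\<Prod>m<n. g (ks!m, vs!m)) = g c * F g" for g :: "nat \<times> nat \<Rightarrow> real"
    unfolding F_def c_def using i by (subst prod.remove[of _ i]) auto
  have dv: "m < n \<Longrightarrow> j < n \<Longrightarrow> vs!m = vs!j \<longleftrightarrow> m = j" for m j
    using len by (simp add: n_def nth_eq_iff_index_eq)
  have Finv: "F (x(c:=y)) = F x" for x y
    unfolding F_def by (rule prod.cong) (use dv i in \<open>auto simp: c_def\<close>)
  have Rinv: "R (x(c:=y)) = R x" for x y
    unfolding R_def
  proof (rule prod.cong[OF refl])
    fix m assume m: "m \<in> {..<n}"
    have "(ks!m, vs!((m+1) mod n)) \<noteq> c"
    proof
      assume eq: "(ks!m, vs!((m+1) mod n)) = c"
      have mn: "(m+1) mod n < n" using len by simp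
      hence "(m+1) mod n = i" using eq dv[OF mn i(1)] by (simp add: c_def)
      hence im: "(m+1) mod n = i" .
      have "m = (i + n - 1) mod n"
      proof (cases "m + 1 = n")
        case True
        hence "i = 0" using im by simp
        thus ?thesis using True by simp
      next
        case False
        hence "m + 1 < n" using m by simp
        hence "i = m + 1" using im by simp
        hence "i + n - 1 = m + n" by simp
        thus ?thesis using \<open>m + 1 < n\<close> by simp
      qed
      thus False using eq i(2) by (simp add: c_def)
    qed
    thus "(x(c := y)) (ks ! m, vs ! ((m + 1) mod n)) = x (ks ! m, vs ! ((m + 1) mod n))" by simp
  qed
  define S where "S = {g \<in> space M. (\<forall>c\<in>I. g c > 0) \<and> (\<Prod>m<n. g (ks!m, vs!m)) = R g}"
  have cm: "j \<in> I \<Longrightarrow> (\<lambda>g. g j) \<in> borel_measurable M" for j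
    unfolding M_def by (rule comp_meas[OF _ sb])
  have m1: "(\<lambda>g. \<Prod>m<n. g (ks!m, vs!m)) \<in> borel_measurable M"
    by (rule borel_measurable_prod, rule cm, rule inI) auto
  have m2: "R \<in> borel_measurable M"
    unfolding R_def by (rule borel_measurable_prod, rule cm, rule inI) (use len in auto)
  have m3: "{g \<in> space M. \<forall>c\<in>I. g c > 0} \<in> sets M"
  proof -
    have "{g \<in> space M. \<forall>c\<in>I. g c > 0} = space M \<inter> (\<Inter>c\<in>I. {g \<in> space M. g c > 0})" by auto
    also have "\<dots> \<in> sets M"
      using fin cm cI by (intro sets.Int sets.top sets.finite_INT) (auto)
    finally show ?thesis .
  qed
  have m4: "{g \<in> space M. (\<Prod>m<n. g (ks!m, vs!m)) = R g} \<in> sets M"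
    using m1 m2 by measurable
  have "S = {g \<in> space M. \<forall>c\<in>I. g c > 0} \<inter> {g \<in> space M. (\<Prod>m<n. g (ks!m, vs!m)) = R g}"
    by (auto simp: S_def)
  hence Ss: "S \<in> sets M" using m3 m4 by simp
  have Snull: "S \<in> null_sets M"
    unfolding M_def
  proof (rule slice_null[OF P fin cI])
    show "S \<in> sets (PiM I (\<lambda>_. \<mu>))" using Ss by (simp add: M_def)
    fix x :: "nat \<times> nat \<Rightarrow> real"
    define x0 where "x0 = x(c := 0)"
    let ?N = "{R x0 / F x0}"
    have "?N \<in> null_sets \<mu>" using pt sb by (auto intro!: null_setsI)
    moreover have "y \<in> ?N" if y: "x(c:=y) \<in> S" for y
    proof -
      let ?x = "x(c:=y)"
      have pos: "\<forall>d\<in>I. ?x d > 0" and eq: "(\<Prod>m<n. ?x (ks!m, vs!m)) = R ?x" using y by (auto simp: S_def)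
      have Fp: "F ?x > 0" unfolding F_def by (rule prod_pos) (use pos inI in auto)
      have "y * F ?x = R ?x" using eq L[of ?x] by simp
      moreover have "F ?x = F x0" "R ?x = R x0" unfolding x0_def
        by (metis Finv fun_upd_upd) (metis Rinv fun_upd_upd)
      ultimately show ?thesis using Fp by (simp add: field_simps)
    qed
    ultimately show "\<exists>N\<in>null_sets \<mu>. \<forall>y. x(c := y) \<in> S \<longrightarrow> y \<in> N" by blast
  qed
  have "AE g in M. g \<notin> S" by (rule AE_not_in[OF Snull])
  moreover have "AE g in M. g \<notin> S \<longrightarrow> ((\<forall>c\<in>I. g c > 0) \<longrightarrow> (\<Prod>m<n. g (ks!m, vs!m)) \<noteq> R g)"
    by (rule AE_I2) (auto simp: S_def)
  ultimately have "AE g in M. (\<forall>c\<in>I. g c > 0) \<longrightarrow> (\<Prod>m<n. g (ks!m, vs!m)) \<noteq> R g"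
    by eventually_elim auto
  thus ?thesis unfolding M_def I_def R_def n_def by simp
qed

lemma pos_ae:
  fixes \<mu> :: "real measure"
  assumes P: "prob_space \<mu>" and sb: "sets \<mu> = sets borel"
    and one: "emeasure \<mu> {0<..} = 1" and fin: "finite I"
  shows "AE g in PiM I (\<lambda>_. \<mu>). \<forall>c\<in>I. g c > 0"
proof (rule AE_ball_countable')
  show "countable I" using fin by (rule countable_finite)
  fix c assume cI: "c \<in> I"
  have sp: "space \<mu> = UNIV" using sets_eq_imp_space_eq[OF sb] by simp
  have "AE y in \<mu>. y \<in> {0<..}"
    using prob_space.AE_in_set_eq_1[OF P, of "{0<..}"] one sb by (simp add: measure_def)
  then obtain N0 where N0: "{y\<in>space \<mu>. y \<notin> {0<..}} \<subseteq> N0" "emeasure \<mu> N0 = 0" "N0 \<in> sets \<mu>"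
    by (rule AE_E)
  define S where "S = {g \<in> space (PiM I (\<lambda>_. \<mu>)). g c \<le> 0}"
  have cm: "(\<lambda>g. g c) \<in> borel_measurable (PiM I (\<lambda>_. \<mu>))" by (rule comp_meas[OF cI sb])
  have Ss: "S \<in> sets (PiM I (\<lambda>_. \<mu>))" unfolding S_def using cm by measurable
  have "S \<in> null_sets (PiM I (\<lambda>_. \<mu>))"
  proof (rule slice_null[OF P fin cI Ss])
    fix x :: "'a \<Rightarrow> real"
    have "N0 \<in> null_sets \<mu>" using N0 by (simp add: null_sets_def)
    moreover have "\<forall>y. x(c := y) \<in> S \<longrightarrow> y \<in> N0" using N0(1) sp by (auto simp: S_def)
    ultimately show "\<exists>N\<in>null_sets \<mu>. \<forall>y. x(c := y) \<in> S \<longrightarrow> y \<in> N" by blast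
  qed
  then show "AE g in PiM I (\<lambda>_. \<mu>). g c > 0"
    by (rule AE_I') (auto simp: S_def)
qed

theorem lemma1:
  fixes K A :: nat
    and P b \<sigma>2 :: "nat \<Rightarrow> real"
    and \<mu> :: "real measure"
  assumes "K \<ge> 1" and "A \<ge> 1"
    and "\<forall>k\<in>users K. P k > 0"
    and "\<forall>\<alpha>\<in>nodes A. b \<alpha> > 0"
    and "\<forall>\<alpha>\<in>nodes A. \<sigma>2 \<alpha> > 0"
    and "prob_space \<mu>" and "sets \<mu> = sets borel"
    and "\<forall>x. emeasure \<mu> {x} = 0"
    and "emeasure \<mu> {0<..} = 1"
  shows "AE g in PiM (users K \<times> nodes A) (\<lambda>_. \<mu>).
           \<forall>p E. nash_eq K A P b \<sigma>2 g p \<longrightarrow> represents K A p E \<longrightarrow> is_forest (nodes A) E"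
proof -
  have fin: "finite (users K \<times> nodes A)" by (simp add: users_def nodes_def)
  have pos: "AE g in PiM (users K \<times> nodes A) (\<lambda>_. \<mu>). \<forall>c\<in>users K \<times> nodes A. g c > 0"
    by (rule pos_ae[OF assms(6,7,9) fin])
  define X where "X = {y. goodpat K A (fst y) (snd y)}"
  have pats: "AE g in PiM (users K \<times> nodes A) (\<lambda>_. \<mu>). \<forall>y\<in>X.
     (\<forall>c\<in>users K \<times> nodes A. g c > 0) \<longrightarrow>
     (\<Prod>m<length (fst y). g (snd y!m, fst y!m)) \<noteq>
     (\<Prod>m<length (fst y). g (snd y!m, fst y!((m+1) mod length (fst y))))"
  proof (rule AE_ball_countable')
    fix y assume "y \<in> X"
    thus "AE g in PiM (users K \<times> nodes A) (\<lambda>_. \<mu>). (\<forall>c\<in>users K \<times> nodes A. g c > 0) \<longrightarrow>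
     (\<Prod>m<length (fst y). g (snd y!m, fst y!m)) \<noteq>
     (\<Prod>m<length (fst y). g (snd y!m, fst y!((m+1) mod length (fst y))))"
      using pat_null[OF assms(6,7,8), of K A "fst y" "snd y"] by (simp add: X_def)
  qed simp
  show ?thesis using pos pats
  proof eventually_elim
    case (elim g)
    show ?case
    proof (intro allI impI)
      fix p E assume ne: "nash_eq K A P b \<sigma>2 g p" and rep: "represents K A p E"
      show "is_forest (nodes A) E" unfolding is_forest_def
      proof
        assume cyc: "has_cycle (nodes A) E"
        have gpos: "\<forall>k\<in>users K. \<forall>\<alpha>\<in>nodes A. g (k,\<alpha>) > 0" using elim(1) by auto
        obtain vs ks where gp: "goodpat K A vs ks" and
          eq: "(\<Prod>m<length vs. g (ks!m, vs!m)) = (\<Prod>m<length vs. g (ks!m, vs!((m+1) mod length vs)))"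
          using cycle_pattern[OF assms(4) assms(5) gpos ne rep cyc] by blast
        have "(vs, ks) \<in> X" using gp by (simp add: X_def)
        thus False using elim(2) elim(1) eq by fastforce
      qed
    qed
  qed
qed


end
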